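(* Fix an integer $m\ge 3$. Then $\lim_{n\to\infty}|\tau_{C_m\odot\overline{K}_n}|=\infty$.
   Context: $C_m$ is the cycle of length $m$. An edge-magic labeling of a $(p,q)$-graph $G$ (with $p$ vertices and $q$ edges) is a bijection $f:V(G)\cup E(G)\to[1,p+q]$ such that $f(x)+f(xy)+f(y)$ equals a constant (the valence) for every edge $xy$. For a graph $H$, $\tau_H$ is the set of integers that are valences of edge-magic labelings of $H$. $G\odot\overline{K}_n$ is the graph obtained from $G$ by attaching $n$ new pendant vertices to each vertex of $G$. *)

theory Defs
  imports Main
begin

definition edge_magic_labeling ::
  "'v set \<Rightarrow> 'v set set \<Rightarrow> ('v + 'v set \<Rightarrow> nat) \<Rightarrow> nat \<Rightarrow> bool" where
  "edge_magic_labeling V E f k \<longleftrightarrow>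
     bij_betw f (Inl ` V \<union> Inr ` E) {1 .. card V + card E} \<and>
     (\<forall>x y. {x, y} \<in> E \<longrightarrow> x \<noteq> y \<longrightarrow> f (Inl x) + f (Inr {x, y}) + f (Inl y) = k)"

definition valences :: "'v set \<Rightarrow> 'v set set \<Rightarrow> nat set" where
  "valences V E = {k. \<exists>f. edge_magic_labeling V E f k}"

definition cycle_V :: "nat \<Rightarrow> nat set" where
  "cycle_V m = {..<m}"

definition cycle_E :: "nat \<Rightarrow> nat set set" where
  "cycle_E m = {{i, (i + 1) mod m} | i. i < m}"

text \<open>Corona with n pendant vertices at each vertex: old vertex v becomes Inl v,
the j-th pendant vertex attached to v is Inr (v, j).\<close>

definition corona_V :: "'v set \<Rightarrow> nat \<Rightarrow> ('v + 'v \<times> nat) set" where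
  "corona_V V n = Inl ` V \<union> Inr ` (V \<times> {..<n})"

definition corona_E :: "'v set \<Rightarrow> 'v set set \<Rightarrow> nat \<Rightarrow> ('v + 'v \<times> nat) set set" where
  "corona_E V E n = (\<lambda>e. Inl ` e) ` E \<union> {{Inl v, Inr (v, j)} | v j. v \<in> V \<and> j < n}"

end

theory Submission
  imports Defs
begin


definition gadget :: "nat \<Rightarrow> (nat \<Rightarrow> nat) \<Rightarrow> (nat \<Rightarrow> nat) \<Rightarrow> (nat \<Rightarrow> nat) \<Rightarrow> nat \<Rightarrow> bool" where
  "gadget m h g t K \<longleftrightarrow>
     (\<forall>i<m. h i < 2*m \<and> g i < 2*m \<and> t i \<le> 2 \<and> h i + g i + h (Suc i mod m) = K + 2*m*t i) \<and>
     (\<forall>c<2*m. \<exists>i<m. c = h i \<or> c = g i)"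

lemma cycle_E_img: "cycle_E m = (\<lambda>i. {i, Suc i mod m}) ` {..<m}"
  unfolding cycle_E_def by auto

lemma card_cycle_E:
  assumes "3 \<le> m" shows "card (cycle_E m) = m"
proof -
  have eq: "cycle_E m = (\<lambda>i. {i, Suc i mod m}) ` {..<m}"
    by (rule cycle_E_img)
  have inj: "inj_on (\<lambda>i. {i, Suc i mod m}) {..<m}"
  proof (rule inj_onI)
    fix i j assume i: "i \<in> {..<m}" and j: "j \<in> {..<m}" and e: "{i, Suc i mod m} = {j, Suc j mod m}"
    show "i = j"
    proof (rule ccontr)
      assume ne: "i \<noteq> j"
      from e ne have a: "i = Suc j mod m" and b: "Suc i mod m = j"
        by (auto simp: doubleton_eq_iff)
      show False
      proof (cases "Suc i < m")
        case True
        then have "j = Suc i" using b by simp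
        show False
        proof (cases "Suc j < m")
          case True
          then have "i = Suc j" using a by simp
          with \<open>j = Suc i\<close> show False by simp
        next
          case False
          then have "Suc j = m" using j by simp
          then have "i = 0" using a by simp
          with \<open>j = Suc i\<close> \<open>Suc j = m\<close> assms show False by simp
        qed
      next
        case False
        then have "Suc i = m" using i by simp
        then have "j = 0" using b by simp
        then have "i = Suc 0 mod m" using a by simp
        also have "\<dots> = 1" using assms by simp
        finally show False using \<open>Suc i = m\<close> assms by simp
      qed
    qed
  qed
  show ?thesis unfolding eq using card_image[OF inj] by simp
qed

locale cor =
  fixes m n r0 :: nat and h g t :: "nat \<Rightarrow> nat" and K :: nat
  assumes m3: "3 \<le> m" and gad: "gadget m h g t K" and r02: "2 \<le> r0" and r0n: "r0 \<le> n"
begin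

definition nx :: "nat \<Rightarrow> nat" where "nx i = Suc i mod m"
definition pv :: "nat \<Rightarrow> nat" where "pv i = (i + m - 1) mod m"
definition rho :: "nat \<Rightarrow> nat" where "rho i = r0 - t i"
definition L :: "nat \<Rightarrow> nat \<Rightarrow> nat" where "L r c = 2*m*r + c + 1"
definition rw :: "nat \<Rightarrow> nat \<Rightarrow> nat" where "rw i j = (if j < rho (pv i) then j else Suc j)"
definition kk :: nat where "kk = 2*m*(n+r0) + 3 + K"

fun fv :: "nat + nat \<times> nat \<Rightarrow> nat" where
  "fv (Inl i) = L (rho i) (h (nx i))"
| "fv (Inr (i,j)) = L (rw i j) (h i)"

fun f :: "(nat + nat \<times> nat) + (nat + nat \<times> nat) set \<Rightarrow> nat" where
  "f (Inl x) = fv x"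
| "f (Inr e) = kk - sum fv e"

lemma m0: "0 < m" using m3 by simp

lemma nx_lt: "nx i < m" unfolding nx_def using m0 by simp
lemma pv_lt: "pv i < m" unfolding pv_def using m0 by simp
lemma nx_pv: "i < m \<Longrightarrow> nx (pv i) = i"
proof -
  assume i: "i < m"
  have "nx (pv i) = Suc ((i + m - 1) mod m) mod m" by (simp add: nx_def pv_def)
  also have "\<dots> = Suc (i + m - 1) mod m" by (simp add: mod_Suc_eq)
  also have "Suc (i + m - 1) = i + m" using m0 by simp
  finally show ?thesis using i by simp
qed
lemma nx_ne: "i < m \<Longrightarrow> nx i \<noteq> i"
proof -
  assume i: "i < m"
  show ?thesis
  proof (cases "Suc i < m")
    case True then show ?thesis by (simp add: nx_def)
  next
    case False then have "Suc i = m" using i by simp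
    then show ?thesis using m3 by (simp add: nx_def)
  qed
qed

lemma gad_i: "i < m \<Longrightarrow> h i < 2*m \<and> g i < 2*m \<and> t i \<le> 2 \<and> h i + g i + h (nx i) = K + 2*m*t i"
  using gad by (simp add: gadget_def nx_def)

lemma rho_t: "i < m \<Longrightarrow> rho i + t i = r0"
  using gad_i[of i] r02 by (simp add: rho_def)
lemma rho_le: "rho i \<le> n" using r0n by (simp add: rho_def)

lemma L_range: "r \<le> n \<Longrightarrow> c < 2*m \<Longrightarrow> L r c \<in> {1..2*m*(n+1)}"
proof -
  assume r: "r \<le> n" and c: "c < 2*m"
  have A: "2*m*r \<le> 2*m*n" using r by simp
  have B: "2*m*(n+1) = 2*m*n + 2*m" by simp
  have "L r c \<le> 2*m*(n+1)" unfolding L_def using A B c by linarith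
  then show ?thesis by (simp add: L_def)
qed

lemma cyc_id: "i < m \<Longrightarrow> fv (Inl i) + fv (Inl (nx i)) + L (n - rho i) (g (nx i)) = kk"
proof -
  assume i: "i < m"
  have j: "nx i < m" by (simp add: nx_lt)
  have G: "h (nx i) + g (nx i) + h (nx (nx i)) = K + 2*m*t (nx i)" using gad_i[OF j] by simp
  have a: "2*m*rho i + 2*m*(n - rho i) = 2*m*n"
    using rho_le[of i] by (simp add: add_mult_distrib2[symmetric])
  have b: "2*m*rho (nx i) + 2*m*t (nx i) = 2*m*r0"
    using rho_t[OF j] by (simp add: add_mult_distrib2[symmetric])
  have c: "kk = 2*m*n + 2*m*r0 + 3 + K" by (simp add: kk_def algebra_simps)
  have "fv (Inl i) + fv (Inl (nx i)) + L (n - rho i) (g (nx i)) =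
        2*m*rho i + 2*m*(n - rho i) + 2*m*rho (nx i) + (h (nx i) + g (nx i) + h (nx (nx i))) + 3"
    by (simp add: L_def)
  also have "\<dots> = kk" using a b c G by linarith
  finally show ?thesis .
qed

lemma rw_le: "j < n \<Longrightarrow> rw i j \<le> n" by (simp add: rw_def)

lemma pend_id: "i < m \<Longrightarrow> j < n \<Longrightarrow> fv (Inl i) + fv (Inr (i,j)) + L (n - rw i j) (g i) = kk"
proof -
  assume i: "i < m" and jn: "j < n"
  have G: "h i + g i + h (nx i) = K + 2*m*t i" using gad_i[OF i] by simp
  have a: "2*m*rw i j + 2*m*(n - rw i j) = 2*m*n"
    using rw_le[OF jn, of i] by (simp add: add_mult_distrib2[symmetric])
  have b: "2*m*rho i + 2*m*t i = 2*m*r0"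
    using rho_t[OF i] by (simp add: add_mult_distrib2[symmetric])
  have c: "kk = 2*m*n + 2*m*r0 + 3 + K" by (simp add: kk_def algebra_simps)
  have "fv (Inl i) + fv (Inr (i,j)) + L (n - rw i j) (g i) =
        2*m*rho i + 2*m*rw i j + 2*m*(n - rw i j) + (h i + g i + h (nx i)) + 3"
    by (simp add: L_def)
  also have "\<dots> = kk" using a b c G by linarith
  finally show ?thesis .
qed

abbreviation "CV \<equiv> corona_V (cycle_V m) n"
abbreviation "CE \<equiv> corona_E (cycle_V m) (cycle_E m) n"

lemma CV_eq: "CV = Inl ` {..<m} \<union> Inr ` ({..<m} \<times> {..<n})"
  by (simp add: corona_V_def cycle_V_def)

lemma CE_eq: "CE = (\<lambda>i. {Inl i, Inl (nx i)}) ` {..<m} \<union> (\<lambda>(i,j). {Inl i, Inr (i,j)}) ` ({..<m} \<times> {..<n})"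
proof -
  have 1: "(\<lambda>e. Inl ` e) ` cycle_E m = (\<lambda>i. {Inl i, Inl (nx i)}) ` {..<m}"
    unfolding cycle_E_img image_image nx_def by simp
  have 2: "{{Inl v, Inr (v, j)} |v j. v \<in> cycle_V m \<and> j < n} = (\<lambda>(i,j). {Inl i, Inr (i,j)}) ` ({..<m} \<times> {..<n})"
    unfolding cycle_V_def by auto
  show ?thesis unfolding corona_E_def 1 2 ..
qed

lemma fin_CV: "finite CV" by (simp add: CV_eq)
lemma fin_CE: "finite CE" by (simp add: CE_eq)

lemma card_CV: "card CV = m + m*n"
proof -
  have "card (Inl ` {..<m} :: (nat + nat \<times> nat) set) = m"
    by (simp add: card_image)
  moreover have "card (Inr ` ({..<m} \<times> {..<n}) :: (nat + nat \<times> nat) set) = m*n"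
    by (simp add: card_image card_cartesian_product)
  moreover have "Inl ` {..<m} \<inter> Inr ` ({..<m} \<times> {..<n}) = ({} :: (nat + nat \<times> nat) set)" by auto
  ultimately show ?thesis unfolding CV_eq by (simp add: card_Un_disjoint)
qed

lemma card_CE: "card CE = m + m*n"
proof -
  have e1: "(\<lambda>i. {Inl i, Inl (nx i)}) ` {..<m} = (\<lambda>e. Inl ` e) ` cycle_E m"
    unfolding cycle_E_img image_image nx_def by simp
  have inj1: "inj_on (\<lambda>e. (Inl ` e :: (nat + nat \<times> nat) set)) (cycle_E m)"
    by (rule inj_onI) (simp add: inj_image_eq_iff)
  have c1: "card ((\<lambda>i. {Inl i, Inl (nx i)}) ` {..<m} :: (nat + nat \<times> nat) set set) = m"
    unfolding e1 using card_image[OF inj1] card_cycle_E[OF m3] by simp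
  have inj2: "inj_on (\<lambda>(i,j). ({Inl i, Inr (i,j)} :: (nat + nat \<times> nat) set)) ({..<m} \<times> {..<n})"
    by (rule inj_onI) (auto simp: doubleton_eq_iff)
  have c2: "card ((\<lambda>(i,j). ({Inl i, Inr (i,j)} :: (nat + nat \<times> nat) set)) ` ({..<m} \<times> {..<n})) = m*n"
    using card_image[OF inj2] by (simp add: card_cartesian_product)
  have d: "(\<lambda>i. {Inl i, Inl (nx i)}) ` {..<m} \<inter> (\<lambda>(i,j). ({Inl i, Inr (i,j)} :: (nat + nat \<times> nat) set)) ` ({..<m} \<times> {..<n}) = {}"
    by (auto simp: doubleton_eq_iff)
  show ?thesis unfolding CE_eq using c1 c2 d by (simp add: card_Un_disjoint)
qed


lemma f_cyc: "i < m \<Longrightarrow> f (Inr {Inl i, Inl (nx i)}) = L (n - rho i) (g (nx i))"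
proof -
  assume i: "i < m"
  have "sum fv {Inl i, Inl (nx i)} = fv (Inl i) + fv (Inl (nx i))"
    using nx_ne[OF i] by simp
  then show ?thesis using cyc_id[OF i] by simp
qed

lemma f_pend: "i < m \<Longrightarrow> j < n \<Longrightarrow> f (Inr {Inl i, Inr (i,j)}) = L (n - rw i j) (g i)"
proof -
  assume i: "i < m" and j: "j < n"
  have "sum fv {Inl i, Inr (i,j)} = fv (Inl i) + fv (Inr (i,j))" by simp
  then show ?thesis using pend_id[OF i j] by simp
qed

abbreviation "D \<equiv> Inl ` CV \<union> Inr ` CE"

lemma fin_D: "finite D" using fin_CV fin_CE by simp

lemma card_D: "card D = 2*m*(n+1)"
proof -
  have "card D = card CV + card CE"
    using fin_CV fin_CE by (subst card_Un_disjoint) (auto simp: card_image)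
  also have "\<dots> = 2*m*(n+1)" by (simp add: card_CV card_CE algebra_simps)
  finally show ?thesis .
qed

lemma img_sub: "f ` D \<subseteq> {1..2*m*(n+1)}"
proof
  fix y assume "y \<in> f ` D"
  then obtain x where x: "x \<in> D" and y: "y = f x" by auto
  from x consider (a) i where "i < m" "x = Inl (Inl i)"
    | (b) i j where "i < m" "j < n" "x = Inl (Inr (i,j))"
    | (c) i where "i < m" "x = Inr {Inl i, Inl (nx i)}"
    | (d) i j where "i < m" "j < n" "x = Inr {Inl i, Inr (i,j)}"
    unfolding CV_eq CE_eq by auto
  then show "y \<in> {1..2*m*(n+1)}"
  proof cases
    case a then show ?thesis using y L_range[OF rho_le] gad_i[OF nx_lt] by simp
  next
    case b then show ?thesis using y L_range[OF rw_le] gad_i by simp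
  next
    case c then show ?thesis using y f_cyc L_range gad_i[OF nx_lt] by simp
  next
    case d then show ?thesis using y f_pend L_range gad_i by simp
  qed
qed

lemma rw_inv: "i < m \<Longrightarrow> r \<le> n \<Longrightarrow> r \<noteq> rho (pv i) \<Longrightarrow> \<exists>j<n. rw i j = r"
proof -
  assume i: "i < m" and r: "r \<le> n" and ne: "r \<noteq> rho (pv i)"
  show ?thesis
  proof (cases "r < rho (pv i)")
    case True
    then have "r < n" using rho_le[of "pv i"] by simp
    then show ?thesis using True by (intro exI[of _ r]) (simp add: rw_def)
  next
    case False
    then have gt: "rho (pv i) < r" using ne by simp
    then have "r - 1 < n" using r by simp
    moreover have "rw i (r - 1) = r" using gt by (simp add: rw_def)
    ultimately show ?thesis by blast
  qed
qed

lemma img_sup: "{1..2*m*(n+1)} \<subseteq> f ` D"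
proof
  fix l assume l: "l \<in> {1..2*m*(n+1)}"
  define r where "r = (l - 1) div (2*m)"
  define c where "c = (l - 1) mod (2*m)"
  have lrc: "l = L r c"
  proof -
    have "(l - 1) div (2*m) * (2*m) + (l - 1) mod (2*m) = l - 1" by (rule div_mult_mod_eq)
    then have "2*m*r + c = l - 1" unfolding r_def c_def by (simp add: mult.commute)
    then show ?thesis using l by (simp add: L_def)
  qed
  have rn: "r \<le> n"
  proof -
    define M where "M = 2*m*(n+1)"
    have l1: "1 \<le> l" "l \<le> M" using l by (auto simp: M_def)
    have "l - 1 < M" using l1 by arith
    then have "l - 1 < (n+1) * (2*m)" by (simp add: M_def mult.commute)
    then have "r < n + 1" unfolding r_def using m0 by (simp add: div_less_iff_less_mult)
    then show ?thesis by simp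
  qed
  have cm: "c < 2*m" unfolding c_def using m0 by simp
  obtain i where i: "i < m" and ci: "c = h i \<or> c = g i" using gad cm by (auto simp: gadget_def)
  define p where "p = pv i"
  have p: "p < m" by (simp add: p_def pv_lt)
  have np: "nx p = i" using nx_pv[OF i] by (simp add: p_def)
  from ci show "l \<in> f ` D"
  proof
    assume ch: "c = h i"
    show ?thesis
    proof (cases "r = rho p")
      case True
      have "Inl (Inl p) \<in> D" using p by (simp add: CV_eq)
      moreover have "f (Inl (Inl p)) = l" using True np lrc ch by simp
      ultimately show ?thesis by force
    next
      case False
      then obtain j where j: "j < n" and rj: "rw i j = r" using rw_inv[OF i rn] p_def by auto
      have "Inl (Inr (i,j)) \<in> D" using i j by (simp add: CV_eq)
      moreover have "f (Inl (Inr (i,j))) = l" using rj lrc ch by simp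
      ultimately show ?thesis by force
    qed
  next
    assume cg: "c = g i"
    show ?thesis
    proof (cases "n - r = rho p")
      case True
      have "Inr {Inl p, Inl (nx p)} \<in> D" using p by (simp add: CE_eq)
      moreover have "n - rho p = r" using True rn by arith
      moreover have "f (Inr {Inl p, Inl (nx p)}) = l"
        using f_cyc[OF p] \<open>n - rho p = r\<close> np lrc cg by simp
      ultimately show ?thesis by force
    next
      case False
      have "n - r \<le> n" by simp
      then obtain j where j: "j < n" and rj: "rw i j = n - r" using rw_inv[OF i _ False[unfolded p_def]] by auto
      have "{Inl i, Inr (i,j)} \<in> (\<lambda>(i,j). {Inl i, Inr (i,j)}) ` ({..<m} \<times> {..<n})"
        using i j by (intro rev_image_eqI[of "(i,j)"]) auto
      then have "Inr {Inl i, Inr (i,j)} \<in> D" by (simp add: CE_eq)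
      moreover have "f (Inr {Inl i, Inr (i,j)}) = l" using f_pend[OF i j] rj lrc cg rn by simp
      ultimately show ?thesis by force
    qed
  qed
qed

lemma bij: "bij_betw f D {1..card CV + card CE}"
proof -
  have T: "card CV + card CE = 2*m*(n+1)" by (simp add: card_CV card_CE algebra_simps)
  have im: "f ` D = {1..2*m*(n+1)}" using img_sub img_sup by blast
  have "inj_on f D"
    using fin_D card_D im by (simp add: inj_on_iff_eq_card)
  then show ?thesis unfolding bij_betw_def T using im by simp
qed

lemma magic: "{x,y} \<in> CE \<Longrightarrow> x \<noteq> y \<Longrightarrow> f (Inl x) + f (Inr {x,y}) + f (Inl y) = kk"
proof -
  assume e: "{x,y} \<in> CE" and ne: "x \<noteq> y"
  have s: "sum fv {x,y} = fv x + fv y" using ne by simp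
  have le: "fv x + fv y \<le> kk"
  proof -
    from e consider (c) i where "i<m" "{x,y} = {Inl i, Inl (nx i)}"
      | (p) i j where "i<m" "j<n" "{x,y} = {Inl i, Inr (i,j)}"
      unfolding CE_eq by auto
    then show ?thesis
    proof cases
      case c
      then have "fv x + fv y = fv (Inl i) + fv (Inl (nx i))" by (auto simp: doubleton_eq_iff)
      then show ?thesis using cyc_id[OF c(1)] by linarith
    next
      case p
      then have "fv x + fv y = fv (Inl i) + fv (Inr (i,j))" by (auto simp: doubleton_eq_iff)
      then show ?thesis using pend_id[OF p(1) p(2)] by linarith
    qed
  qed
  show ?thesis using s le by simp
qed

lemma kk_val: "kk \<in> valences CV CE"
  unfolding valences_def edge_magic_labeling_def
  using bij magic by blast

end

lemma valence_exists:
  assumes "3 \<le> m" "gadget m h g t K" "2 \<le> r0" "r0 \<le> n"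
  shows "2*m*(n+r0) + 3 + K \<in> valences (corona_V (cycle_V m) n) (corona_E (cycle_V m) (cycle_E m) n)"
proof -
  interpret cor m n r0 h g t K using assms by unfold_locales
  show ?thesis using kk_val by (simp add: kk_def)
qed




lemma gadgetI:
  assumes "\<And>i. i < m \<Longrightarrow> h i < 2*m \<and> g i < 2*m \<and> t i \<le> 2 \<and> h i + g i + h (Suc i mod m) = K + 2*m*t i"
      and "\<And>c. c < 2*m \<Longrightarrow> \<exists>i<m. c = h i \<or> c = g i"
  shows "gadget m h g t K"
  using assms unfolding gadget_def by blast

lemma witH: "w < m \<Longrightarrow> c = h w \<Longrightarrow> \<exists>i<m. c = h i \<or> c = g i" by blast
lemma witG: "w < m \<Longrightarrow> c = g w \<Longrightarrow> \<exists>i<m. c = h i \<or> c = g i" by blast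

lemma ev_od: fixes i :: nat obtains a where "i = 2*a" | a where "i = 2*a+1"
proof -
  have "\<exists>a. i = 2*a \<or> i = 2*a+1" by presburger
  then show ?thesis using that by blast
qed

section \<open>Family A: m = 2q+1\<close>

definition hA :: "nat \<Rightarrow> nat \<Rightarrow> nat" where
  "hA q i = (if even i then i div 2 else q + 1 + i div 2)"
definition gA :: "nat \<Rightarrow> nat \<Rightarrow> nat" where
  "gA q i = (if i = 2*q then 4*q+1 else if even i then 4*q - 2*(i div 2) else 4*q - 1 - 2*(i div 2))"

lemma hA_e: "hA q (2*a) = a" by (simp add: hA_def)
lemma hA_o: "hA q (2*a+1) = q + 1 + a" by (simp add: hA_def)
lemma gA_e: "a \<noteq> q \<Longrightarrow> gA q (2*a) = 4*q - 2*a" by (simp add: gA_def)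
lemma gA_q: "gA q (2*q) = 4*q+1" by (simp add: gA_def)
lemma gA_o: "gA q (2*a+1) = 4*q - 1 - 2*a"
proof -
  have "2*a+1 \<noteq> 2*q" by presburger
  then show ?thesis by (simp add: gA_def)
qed

lemma gadA:
  assumes q: "1 \<le> q"
  shows "gadget (2*q+1) (hA q) (gA q) (\<lambda>_. 1) (q - 1)"
proof (rule gadgetI)
  fix i assume i: "i < 2*q+1"
  show "hA q i < 2*(2*q+1) \<and> gA q i < 2*(2*q+1) \<and> (1::nat) \<le> 2 \<and>
        hA q i + gA q i + hA q (Suc i mod (2*q+1)) = q - 1 + 2*(2*q+1)*1"
  proof (cases i rule: ev_od)
    case (1 a)
    show ?thesis
    proof (cases "a = q")
      case True
      have si: "Suc i = 2*q+1" using 1 True by simp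
      have s: "Suc i mod (2*q+1) = 2*0" unfolding si by simp
      have e: "hA q (2*0) = 0" by (rule hA_e)
      show ?thesis unfolding s unfolding 1 True gA_q hA_e[of q q] e using q by simp
    next
      case False
      then have aq: "a < q" using i 1 by simp
      have s: "Suc i mod (2*q+1) = 2*a+1" using 1 aq by simp
      show ?thesis unfolding s unfolding 1 gA_e[OF False] hA_e hA_o using aq by simp
    qed
  next
    case (2 a)
    then have aq: "a < q" using i by simp
    have s: "Suc i mod (2*q+1) = 2*(a+1)" using 2 aq by simp
    show ?thesis unfolding s unfolding 2 gA_o hA_e hA_o using aq by simp
  qed
next
  fix c assume c: "c < 2*(2*q+1)"
  show "\<exists>i<2*q+1. c = hA q i \<or> c = gA q i"
  proof (cases "c \<le> q")
    case True
    show ?thesis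
    proof (rule witH[of "2*c"])
      show "2*c < 2*q+1" using True by simp
      show "c = hA q (2*c)" by (subst hA_e) simp
    qed
  next
    case c1: False
    show ?thesis
    proof (cases "c \<le> 2*q")
      case True
      show ?thesis
      proof (rule witH[of "2*(c-q-1)+1"])
        show "2*(c-q-1)+1 < 2*q+1" using True c1 by simp
        show "c = hA q (2*(c-q-1)+1)" using True c1 by (subst hA_o) simp
      qed
    next
      case c2: False
      show ?thesis
      proof (cases "c = 4*q+1")
        case True
        show ?thesis
        proof (rule witG[of "2*q"])
          show "2*q < 2*q+1" by simp
          show "c = gA q (2*q)" using True by (subst gA_q) simp
        qed
      next
        case c3: False
        then have cl: "c \<le> 4*q" using c by simp
        show ?thesis
        proof (cases c rule: ev_od)
          case (1 b)
          then have b: "q+1 \<le> b" "b \<le> 2*q" using c2 cl by auto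
          have ne: "2*q - b \<noteq> q" using b by simp
          show ?thesis
          proof (rule witG[of "2*(2*q-b)"])
            show "2*(2*q-b) < 2*q+1" using b by simp
            show "c = gA q (2*(2*q-b))" using b 1 by (subst gA_e[OF ne]) simp
          qed
        next
          case (2 b)
          then have b: "q \<le> b" "b \<le> 2*q - 1" using c2 cl by auto
          show ?thesis
          proof (rule witG[of "2*(2*q-1-b)+1"])
            show "2*(2*q-1-b)+1 < 2*q+1" using b q by simp
            show "c = gA q (2*(2*q-1-b)+1)" using b 2 q by (subst gA_o) simp
          qed
        qed
      qed
    qed
  qed
qed

section \<open>Family B: m = 4q+2\<close>

definition hB :: "nat \<Rightarrow> nat \<Rightarrow> nat" where
  "hB q i = (if even i then (if i div 2 = 0 then 0 else if i div 2 \<le> q then 2*q+1-i div 2 else 4*q+2-i div 2)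
             else (if i div 2 \<le> q then 4*q+2-i div 2 else 2*q+1-i div 2))"
definition gB :: "nat \<Rightarrow> nat \<Rightarrow> nat" where
  "gB q i = (if even i then (if i div 2 = 0 then 6*q+4 else 4*q+3+2*(i div 2))
             else (if i div 2 = q then 4*q+3 else if i div 2 = 2*q then 2*q+1 else 4*q+4+2*(i div 2)))"
definition tB :: "nat \<Rightarrow> nat \<Rightarrow> nat" where
  "tB q i = (if i = 4*q+1 then 0 else 1)"

lemma gadB:
  assumes q: "1 \<le> q"
  shows "gadget (4*q+2) (hB q) (gB q) (tB q) (2*q+2)"
proof (rule gadgetI)
  fix i assume i: "i < 4*q+2"
  show "hB q i < 2*(4*q+2) \<and> gB q i < 2*(4*q+2) \<and> tB q i \<le> 2 \<and>
        hB q i + gB q i + hB q (Suc i mod (4*q+2)) = 2*q+2 + 2*(4*q+2)*tB q i"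
  proof (cases i rule: ev_od)
    case (1 a)
    then have a: "a \<le> 2*q" using i by simp
    have s: "Suc i mod (4*q+2) = 2*a+1" using 1 a by simp
    have t: "tB q i = 1" using 1 unfolding tB_def by presburger
    consider "a = 0" | "1 \<le> a" "a \<le> q" | "q+1 \<le> a" by linarith
    then show ?thesis
    proof cases
      case 1
      have v1: "hB q (2*a) = 0" and v2: "gB q (2*a) = 6*q+4" and v3: "hB q (2*a+1) = 4*q+2"
        using 1 by (simp_all add: hB_def gB_def)
      show ?thesis unfolding s t unfolding \<open>i = 2*a\<close> v1 v2 v3 using q by simp
    next
      case 2
      have v1: "hB q (2*a) = 2*q+1-a" and v2: "gB q (2*a) = 4*q+3+2*a" and v3: "hB q (2*a+1) = 4*q+2-a"
        using 2 by (simp_all add: hB_def gB_def)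
      show ?thesis unfolding s t unfolding \<open>i = 2*a\<close> v1 v2 v3 using 2 by simp
    next
      case 3
      have v1: "hB q (2*a) = 4*q+2-a" and v2: "gB q (2*a) = 4*q+3+2*a" and v3: "hB q (2*a+1) = 2*q+1-a"
        using 3 by (simp_all add: hB_def gB_def)
      show ?thesis unfolding s t unfolding \<open>i = 2*a\<close> v1 v2 v3 using 3 a by simp
    qed
  next
    case (2 a)
    then have a: "a \<le> 2*q" using i by simp
    show ?thesis
    proof (cases "a = 2*q")
      case True
      have si: "Suc i = 4*q+2" using 2 True by simp
      have s: "Suc i mod (4*q+2) = 0" unfolding si by simp
      have t: "tB q i = 0" using 2 True by (simp add: tB_def)
      have v1: "hB q (2*a+1) = 1" and v2: "gB q (2*a+1) = 2*q+1" and v3: "hB q 0 = 0"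
        using True q by (simp_all add: hB_def gB_def)
      show ?thesis unfolding s t unfolding \<open>i = 2*a+1\<close> v1 v2 v3 by simp
    next
      case False
      then have a': "a < 2*q" using a by simp
      have s: "Suc i mod (4*q+2) = 2*(a+1)" using 2 a' by simp
      have t: "tB q i = 1" using 2 a' by (simp add: tB_def)
      consider "a < q" | "a = q" | "q+1 \<le> a" by linarith
      then show ?thesis
      proof cases
        case 1
        have v1: "hB q (2*a+1) = 4*q+2-a" and v2: "gB q (2*a+1) = 4*q+4+2*a"
          and v3: "hB q (2*(a+1)) = 2*q-a"
          using 1 a' by (simp_all add: hB_def gB_def)
        show ?thesis unfolding s t unfolding \<open>i = 2*a+1\<close> v1 v2 v3 using 1 by simp
      next
        case 2
        have v1: "hB q (2*a+1) = 3*q+2" and v2: "gB q (2*a+1) = 4*q+3"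
          and v3: "hB q (2*(a+1)) = 3*q+1"
          using 2 by (simp_all add: hB_def gB_def)
        show ?thesis unfolding s t unfolding \<open>i = 2*a+1\<close> v1 v2 v3 by simp
      next
        case 3
        have v1: "hB q (2*a+1) = 2*q+1-a" and v2: "gB q (2*a+1) = 4*q+4+2*a"
          and v3: "hB q (2*(a+1)) = 4*q+1-a"
          using 3 a' by (simp_all add: hB_def gB_def)
        show ?thesis unfolding s t unfolding \<open>i = 2*a+1\<close> v1 v2 v3 using 3 a' by simp
      qed
    qed
  qed
next
  fix c assume c: "c < 2*(4*q+2)"
  show "\<exists>i<4*q+2. c = hB q i \<or> c = gB q i"
  proof -
    have "c = 0 \<or> (1 \<le> c \<and> c \<le> q) \<or> (q+1 \<le> c \<and> c \<le> 2*q) \<or> c = 2*q+1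
      \<or> (2*q+2 \<le> c \<and> c \<le> 3*q+1) \<or> (3*q+2 \<le> c \<and> c \<le> 4*q+2) \<or> c = 4*q+3 \<or> 4*q+4 \<le> c"
      by linarith
    then consider "c = 0" | "1 \<le> c" "c \<le> q" | "q+1 \<le> c" "c \<le> 2*q" | "c = 2*q+1"
      | "2*q+2 \<le> c" "c \<le> 3*q+1" | "3*q+2 \<le> c" "c \<le> 4*q+2" | "c = 4*q+3" | "4*q+4 \<le> c"
      by blast
    then show ?thesis
    proof cases
      case 1
      show ?thesis by (rule witH[of 0]) (use 1 in \<open>simp_all add: hB_def\<close>)
    next
      case 2
      show ?thesis
      proof (rule witH[of "2*(2*q+1-c)+1"])
        show "2*(2*q+1-c)+1 < 4*q+2" using 2 by simp
        show "c = hB q (2*(2*q+1-c)+1)" using 2 by (simp add: hB_def)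
      qed
    next
      case 3
      show ?thesis
      proof (rule witH[of "2*(2*q+1-c)"])
        show "2*(2*q+1-c) < 4*q+2" using 3 by simp
        show "c = hB q (2*(2*q+1-c))" using 3 by (simp add: hB_def)
      qed
    next
      case 4
      show ?thesis
      proof (rule witG[of "2*(2*q)+1"])
        show "2*(2*q)+1 < 4*q+2" by simp
        show "c = gB q (2*(2*q)+1)" using 4 q by (simp add: gB_def)
      qed
    next
      case 5
      show ?thesis
      proof (rule witH[of "2*(4*q+2-c)"])
        show "2*(4*q+2-c) < 4*q+2" using 5 by simp
        show "c = hB q (2*(4*q+2-c))" using 5 by (simp add: hB_def)
      qed
    next
      case 6
      show ?thesis
      proof (rule witH[of "2*(4*q+2-c)+1"])
        show "2*(4*q+2-c)+1 < 4*q+2" using 6 by simp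
        show "c = hB q (2*(4*q+2-c)+1)" using 6 by (simp add: hB_def)
      qed
    next
      case 7
      show ?thesis
      proof (rule witG[of "2*q+1"])
        show "2*q+1 < 4*q+2" by simp
        show "c = gB q (2*q+1)" using 7 by (simp add: gB_def)
      qed
    next
      case 8
      show ?thesis
      proof (cases c rule: ev_od)
        case (1 b)
        then have b: "2*q+2 \<le> b" "b \<le> 4*q+1" using 8 c by auto
        show ?thesis
        proof (cases "b = 3*q+2")
          case True
          show ?thesis
          proof (rule witG[of 0])
            show "(0::nat) < 4*q+2" by simp
            show "c = gB q 0" using 1 True by (simp add: gB_def)
          qed
        next
          case False
          define a where "a = b - 2*q - 2"
          have aa: "b = a + 2*q + 2" using b by (simp add: a_def)
          have na: "a \<noteq> q" "a \<noteq> 2*q" using False b aa by auto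
          show ?thesis
          proof (rule witG[of "2*a+1"])
            show "2*a+1 < 4*q+2" using b aa by simp
            show "c = gB q (2*a+1)" using 1 aa na by (simp add: gB_def)
          qed
        qed
      next
        case (2 b)
        then have b: "2*q+2 \<le> b" "b \<le> 4*q+1" using 8 c by auto
        show ?thesis
        proof (rule witG[of "2*(b-2*q-1)"])
          show "2*(b-2*q-1) < 4*q+2" using b by simp
          show "c = gB q (2*(b-2*q-1))" using 2 b by (simp add: gB_def)
        qed
      qed
    qed
  qed
qed

section \<open>Family C: m = 4r+4\<close>

definition hC :: "nat \<Rightarrow> nat \<Rightarrow> nat" where
  "hC r i = (if even i then i div 2 else
     (if i div 2 = 0 then 4*r+1 else if i div 2 \<le> r then 6*r+3+i div 2
      else if i div 2 = r+1 then 4*r+2 else 6*r+4+i div 2))"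
definition gC :: "nat \<Rightarrow> nat \<Rightarrow> nat" where
  "gC r i = (if even i then
     (if i div 2 = 0 then 8*r+7 else if i div 2 \<le> r then 6*r+5-2*(i div 2)
      else if i div 2 = r+1 then 7*r+5 else 6*r+4-2*(i div 2))
   else
     (if i div 2 = 0 then 8*r+6 else if i div 2 \<le> r then 6*r+4-2*(i div 2)
      else if i div 2 = r+1 then 7*r+4 else if i div 2 = 2*r+1 then 4*r+3 else 6*r+3-2*(i div 2)))"

lemma hC_e: "hC r (2*j) = j" by (simp add: hC_def)

lemma gadC:
  assumes r: "1 \<le> r"
  shows "gadget (4*r+4) (hC r) (gC r) (\<lambda>_. 1) (4*r)"
proof (rule gadgetI)
  fix i assume i: "i < 4*r+4"
  show "hC r i < 2*(4*r+4) \<and> gC r i < 2*(4*r+4) \<and> (1::nat) \<le> 2 \<and>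
        hC r i + gC r i + hC r (Suc i mod (4*r+4)) = 4*r + 2*(4*r+4)*1"
  proof (cases i rule: ev_od)
    case (1 j)
    then have j: "j \<le> 2*r+1" using i by simp
    have s: "Suc i mod (4*r+4) = 2*j+1" using 1 j by simp
    consider "j = 0" | "1 \<le> j" "j \<le> r" | "j = r+1" | "r+2 \<le> j" by linarith
    then show ?thesis
    proof cases
      case 1
      have v2: "gC r (2*j) = 8*r+7" and v3: "hC r (2*j+1) = 4*r+1"
        using 1 by (simp_all add: hC_def gC_def)
      show ?thesis unfolding s unfolding \<open>i = 2*j\<close> hC_e v2 v3 using 1 by simp
    next
      case 2
      have v2: "gC r (2*j) = 6*r+5-2*j" and v3: "hC r (2*j+1) = 6*r+3+j"
        using 2 by (simp_all add: hC_def gC_def)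
      show ?thesis unfolding s unfolding \<open>i = 2*j\<close> hC_e v2 v3 using 2 by simp
    next
      case 3
      have v2: "gC r (2*j) = 7*r+5" and v3: "hC r (2*j+1) = 4*r+2"
        using 3 by (simp_all add: hC_def gC_def)
      show ?thesis unfolding s unfolding \<open>i = 2*j\<close> hC_e v2 v3 using 3 by simp
    next
      case 4
      have v2: "gC r (2*j) = 6*r+4-2*j" and v3: "hC r (2*j+1) = 6*r+4+j"
        using 4 by (simp_all add: hC_def gC_def)
      show ?thesis unfolding s unfolding \<open>i = 2*j\<close> hC_e v2 v3 using 4 j by simp
    qed
  next
    case (2 j)
    then have j: "j \<le> 2*r+1" using i by simp
    show ?thesis
    proof (cases "j = 2*r+1")
      case True
      have si: "Suc i = 4*r+4" using 2 True by simp
      have s: "Suc i mod (4*r+4) = 0" unfolding si by simp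
      have v1: "hC r (2*j+1) = 8*r+5" and v2: "gC r (2*j+1) = 4*r+3" and v3: "hC r 0 = 0"
        using True r by (simp_all add: hC_def gC_def)
      show ?thesis unfolding s unfolding \<open>i = 2*j+1\<close> v1 v2 v3 by simp
    next
      case False
      then have j': "j \<le> 2*r" using j by simp
      have s: "Suc i mod (4*r+4) = 2*(j+1)" using 2 j' by simp
      consider "j = 0" | "1 \<le> j" "j \<le> r" | "j = r+1" | "r+2 \<le> j" by linarith
      then show ?thesis
      proof cases
        case 1
        have v1: "hC r (2*j+1) = 4*r+1" and v2: "gC r (2*j+1) = 8*r+6"
          using 1 by (simp_all add: hC_def gC_def)
        show ?thesis unfolding s unfolding \<open>i = 2*j+1\<close> hC_e v1 v2 using 1 by simp
      next
        case 2
        have v1: "hC r (2*j+1) = 6*r+3+j" and v2: "gC r (2*j+1) = 6*r+4-2*j"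
          using 2 by (simp_all add: hC_def gC_def)
        show ?thesis unfolding s unfolding \<open>i = 2*j+1\<close> hC_e v1 v2 using 2 by simp
      next
        case 3
        have v1: "hC r (2*j+1) = 4*r+2" and v2: "gC r (2*j+1) = 7*r+4"
          using 3 by (simp_all add: hC_def gC_def)
        show ?thesis unfolding s unfolding \<open>i = 2*j+1\<close> hC_e v1 v2 using 3 by simp
      next
        case 4
        have v1: "hC r (2*j+1) = 6*r+4+j" and v2: "gC r (2*j+1) = 6*r+3-2*j"
          using 4 False by (simp_all add: hC_def gC_def)
        show ?thesis unfolding s unfolding \<open>i = 2*j+1\<close> hC_e v1 v2 using 4 j' by simp
      qed
    qed
  qed
next
  fix c assume c: "c < 2*(4*r+4)"
  show "\<exists>i<4*r+4. c = hC r i \<or> c = gC r i"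
  proof -
    have "c \<le> 2*r+1 \<or> (2*r+2 \<le> c \<and> c \<le> 4*r) \<or> (4*r+1 \<le> c \<and> c \<le> 4*r+3)
      \<or> (4*r+4 \<le> c \<and> c \<le> 6*r+3) \<or> (6*r+4 \<le> c \<and> c \<le> 7*r+3) \<or> (7*r+4 \<le> c \<and> c \<le> 7*r+5)
      \<or> (7*r+6 \<le> c \<and> c \<le> 8*r+5) \<or> 8*r+6 \<le> c"
      using c by linarith
    then consider (c1) "c \<le> 2*r+1" | (c2) "2*r+2 \<le> c" "c \<le> 4*r" | (c3) "4*r+1 \<le> c" "c \<le> 4*r+3"
      | (c6) "4*r+4 \<le> c" "c \<le> 6*r+3" | (c7) "6*r+4 \<le> c" "c \<le> 7*r+3" | (c8) "7*r+4 \<le> c" "c \<le> 7*r+5"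
      | (c10) "7*r+6 \<le> c" "c \<le> 8*r+5" | (c11) "8*r+6 \<le> c"
      by blast
    then show ?thesis
    proof cases
      case c1
      show ?thesis
      proof (rule witH[of "2*c"])
        show "2*c < 4*r+4" using c1 by simp
        show "c = hC r (2*c)" by (simp add: hC_e)
      qed
    next
      case c2
      show ?thesis
      proof (cases c rule: ev_od)
        case (1 b)
        define j where "j = 3*r+2-b"
        have jb: "b + j = 3*r+2" "r+2 \<le> j" "j \<le> 2*r+1" using 1 c2 by (auto simp: j_def)
        show ?thesis
        proof (rule witG[of "2*j"])
          show "2*j < 4*r+4" using jb by simp
          show "c = gC r (2*j)" using 1 jb by (simp add: gC_def)
        qed
      next
        case (2 b)
        define j where "j = 3*r+1-b"
        have jb: "b + j = 3*r+1" "r+2 \<le> j" "j \<le> 2*r" using 2 c2 by (auto simp: j_def)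
        show ?thesis
        proof (rule witG[of "2*j+1"])
          show "2*j+1 < 4*r+4" using jb by simp
          show "c = gC r (2*j+1)" using 2 jb by (simp add: gC_def)
        qed
      qed
    next
      case c3
      then have "c = 4*r+1 \<or> c = 4*r+2 \<or> c = 4*r+3" by linarith
      then show ?thesis
      proof (elim disjE)
        assume 3: "c = 4*r+1"
      show ?thesis
      proof (rule witH[of 1])
        show "(1::nat) < 4*r+4" by simp
        show "c = hC r 1" using 3 by (simp add: hC_def)
      qed
      next
        assume 4: "c = 4*r+2"
      show ?thesis
      proof (rule witH[of "2*(r+1)+1"])
        show "2*(r+1)+1 < 4*r+4" using r by simp
        show "c = hC r (2*(r+1)+1)" using 4 by (simp add: hC_def)
      qed
      next
        assume 5: "c = 4*r+3"
      show ?thesis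
      proof (rule witG[of "2*(2*r+1)+1"])
        show "2*(2*r+1)+1 < 4*r+4" by simp
        show "c = gC r (2*(2*r+1)+1)" using 5 r by (simp add: gC_def)
      qed
      qed
    next
      case c6
      show ?thesis
      proof (cases c rule: ev_od)
        case (1 b)
        define j where "j = 3*r+2-b"
        have jb: "b + j = 3*r+2" "1 \<le> j" "j \<le> r" using 1 c6 by (auto simp: j_def)
        show ?thesis
        proof (rule witG[of "2*j+1"])
          show "2*j+1 < 4*r+4" using jb by simp
          show "c = gC r (2*j+1)" using 1 jb by (simp add: gC_def)
        qed
      next
        case (2 b)
        define j where "j = 3*r+2-b"
        have jb: "b + j = 3*r+2" "1 \<le> j" "j \<le> r" using 2 c6 by (auto simp: j_def)
        show ?thesis
        proof (rule witG[of "2*j"])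
          show "2*j < 4*r+4" using jb by simp
          show "c = gC r (2*j)" using 2 jb by (simp add: gC_def)
        qed
      qed
    next
      case c7
      define j where "j = c - 6*r - 3"
      have jc: "c = j + 6*r + 3" "1 \<le> j" "j \<le> r" using c7 by (auto simp: j_def)
      show ?thesis
      proof (rule witH[of "2*j+1"])
        show "2*j+1 < 4*r+4" using jc by simp
        show "c = hC r (2*j+1)" using jc by (simp add: hC_def)
      qed
    next
      case c8
      then have "c = 7*r+4 \<or> c = 7*r+5" by linarith
      then show ?thesis
      proof (elim disjE)
        assume 8: "c = 7*r+4"
      show ?thesis
      proof (rule witG[of "2*(r+1)+1"])
        show "2*(r+1)+1 < 4*r+4" using r by simp
        show "c = gC r (2*(r+1)+1)" using 8 by (simp add: gC_def)
      qed
      next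
        assume 9: "c = 7*r+5"
      show ?thesis
      proof (rule witG[of "2*(r+1)"])
        show "2*(r+1) < 4*r+4" using r by simp
        show "c = gC r (2*(r+1))" using 9 by (simp add: gC_def)
      qed
      qed
    next
      case c10
      define j where "j = c - 6*r - 4"
      have jc: "c = j + 6*r + 4" "r+2 \<le> j" "j \<le> 2*r+1" using c10 by (auto simp: j_def)
      show ?thesis
      proof (rule witH[of "2*j+1"])
        show "2*j+1 < 4*r+4" using jc by simp
        show "c = hC r (2*j+1)" using jc by (simp add: hC_def)
      qed
    next
      case c11
      moreover have "c < 8*r+8" using c by simp
      ultimately have "c = 8*r+6 \<or> c = 8*r+7" by linarith
      then show ?thesis
      proof (elim disjE)
        assume 11: "c = 8*r+6"
      show ?thesis
      proof (rule witG[of 1])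
        show "(1::nat) < 4*r+4" by simp
        show "c = gC r 1" using 11 by (simp add: gC_def)
      qed
      next
        assume 12: "c = 8*r+7"
      show ?thesis
      proof (rule witG[of 0])
        show "(0::nat) < 4*r+4" by simp
        show "c = gC r 0" using 12 by (simp add: gC_def)
      qed
      qed
    qed
  qed
qed

section \<open>Family D: m = 4\<close>

definition hD :: "nat \<Rightarrow> nat" where
  "hD i = (if i = 0 then 0 else if i = 1 then 2 else if i = 2 then 1 else 5)"
definition gD :: "nat \<Rightarrow> nat" where
  "gD i = (if i = 0 then 7 else if i = 1 then 6 else if i = 2 then 3 else 4)"

lemma gadD: "gadget 4 hD gD (\<lambda>_. 1) 1"
proof (rule gadgetI)
  fix i :: nat assume "i < 4"
  then have "i = 0 \<or> i = 1 \<or> i = 2 \<or> i = 3" by auto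
  then show "hD i < 2*4 \<and> gD i < 2*4 \<and> (1::nat) \<le> 2 \<and> hD i + gD i + hD (Suc i mod 4) = 1 + 2*4*1"
    by (auto simp: hD_def gD_def)
next
  fix c :: nat assume "c < 2*4"
  then have "c = 0 \<or> c = 1 \<or> c = 2 \<or> c = 3 \<or> c = 4 \<or> c = 5 \<or> c = 6 \<or> c = 7" by auto
  then show "\<exists>i<4. c = hD i \<or> c = gD i"
  proof (elim disjE)
    assume "c = 0" then show ?thesis by (intro exI[of _ 0]) (simp add: hD_def)
  next
    assume "c = 1" then show ?thesis by (intro exI[of _ 2]) (simp add: hD_def)
  next
    assume "c = 2" then show ?thesis by (intro exI[of _ 1]) (simp add: hD_def)
  next
    assume "c = 3" then show ?thesis by (intro exI[of _ 2]) (simp add: gD_def)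
  next
    assume "c = 4" then show ?thesis by (intro exI[of _ 3]) (simp add: gD_def)
  next
    assume "c = 5" then show ?thesis by (intro exI[of _ 3]) (simp add: hD_def)
  next
    assume "c = 6" then show ?thesis by (intro exI[of _ 1]) (simp add: gD_def)
  next
    assume "c = 7" then show ?thesis by (intro exI[of _ 0]) (simp add: gD_def)
  qed
qed

lemma gadget_exists: "3 \<le> m \<Longrightarrow> \<exists>h g t K. gadget m h g t K"
proof -
  assume m: "3 \<le> m"
  have "(\<exists>q. m = 2*q+1 \<and> 1 \<le> q) \<or> m = 4 \<or> (\<exists>q. m = 4*q+2 \<and> 1 \<le> q) \<or> (\<exists>r. m = 4*r+4 \<and> 1 \<le> r)"
    using m by presburger
  then show ?thesis
  proof (elim disjE exE conjE)
    fix q assume "m = 2*q+1" "1 \<le> q" then show ?thesis using gadA by blast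
  next
    assume "m = 4" then show ?thesis using gadD by blast
  next
    fix q assume "m = 4*q+2" "1 \<le> q" then show ?thesis using gadB by blast
  next
    fix r assume "m = 4*r+4" "1 \<le> r" then show ?thesis using gadC by blast
  qed
qed





lemma valences_bounded:
  assumes "{x,y} \<in> E" "x \<noteq> y" "x \<in> V" "y \<in> V"
  shows "valences V E \<subseteq> {..3*(card V + card E)}"
proof
  fix k assume "k \<in> valences V E"
  then obtain f where b: "bij_betw f (Inl ` V \<union> Inr ` E) {1 .. card V + card E}"
    and mg: "\<forall>x y. {x, y} \<in> E \<longrightarrow> x \<noteq> y \<longrightarrow> f (Inl x) + f (Inr {x, y}) + f (Inl y) = k"
    unfolding valences_def edge_magic_labeling_def by blast
  have 1: "f (Inl x) \<le> card V + card E" using bij_betw_apply[OF b] assms(3) by fastforce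
  have 2: "f (Inl y) \<le> card V + card E" using bij_betw_apply[OF b] assms(4) by fastforce
  have 3: "f (Inr {x,y}) \<le> card V + card E" using bij_betw_apply[OF b] assms(1) by fastforce
  have "k = f (Inl x) + f (Inr {x, y}) + f (Inl y)" using mg assms(1,2) by simp
  then show "k \<in> {..3*(card V + card E)}" using 1 2 3 by simp
qed

lemma fin_val:
  assumes m: "3 \<le> m"
  shows "finite (valences (corona_V (cycle_V m) n) (corona_E (cycle_V m) (cycle_E m) n))"
proof -
  have e: "{Inl 0, Inl 1} \<in> corona_E (cycle_V m) (cycle_E m) n"
  proof -
    have "{0, 1} \<in> cycle_E m" unfolding cycle_E_def using m
      by (auto intro!: exI[of _ 0])
    then have "Inl ` {0, 1} \<in> corona_E (cycle_V m) (cycle_E m) n" unfolding corona_E_def by blast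
    then show ?thesis by simp
  qed
  have v: "Inl 0 \<in> corona_V (cycle_V m) n" "Inl 1 \<in> corona_V (cycle_V m) n"
    using m by (auto simp: corona_V_def cycle_V_def)
  show ?thesis
    by (rule finite_subset[OF valences_bounded[OF e _ v]]) auto
qed

lemma card_val_ge:
  assumes m: "3 \<le> m" and n: "2 \<le> n"
  shows "n - 1 \<le> card (valences (corona_V (cycle_V m) n) (corona_E (cycle_V m) (cycle_E m) n))"
proof -
  obtain h g t K where G: "gadget m h g t K" using gadget_exists[OF m] by blast
  let ?S = "(\<lambda>r0. 2*m*(n+r0) + 3 + K) ` {2..n}"
  have sub: "?S \<subseteq> valences (corona_V (cycle_V m) n) (corona_E (cycle_V m) (cycle_E m) n)"
    using valence_exists[OF m G] by auto
  have inj: "inj_on (\<lambda>r0. 2*m*(n+r0) + 3 + K) {2..n}"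
    using m by (auto intro!: inj_onI)
  have "card ?S = n - 1" using card_image[OF inj] by simp
  then show ?thesis using card_mono[OF fin_val[OF m] sub] by simp
qed

theorem mainTheorem5:
  fixes m :: nat
  assumes "m \<ge> 3"
  shows "filterlim
           (\<lambda>n. card (valences (corona_V (cycle_V m) n) (corona_E (cycle_V m) (cycle_E m) n)))
           at_top sequentially"
proof (subst filterlim_at_top, intro allI)
  fix Z :: nat
  show "\<forall>\<^sub>F n in sequentially. Z \<le> card (valences (corona_V (cycle_V m) n) (corona_E (cycle_V m) (cycle_E m) n))"
    unfolding eventually_sequentially
  proof (intro exI[of _ "Z + 2"] allI impI)
    fix n assume "Z + 2 \<le> n"
    then show "Z \<le> card (valences (corona_V (cycle_V m) n) (corona_E (cycle_V m) (cycle_E m) n))"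
      using card_val_ge[OF assms, of n] by simp
  qed
qed


end
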